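(* Let $q$ be a prime power and $1\le s<t\le k$ integers. There exists a linear AOA$(s,t,k,q)$ if and only if there exists a linear MDS code $C$ of length $k$ and dimension $t$ over $\mathbb{F}_q$ which contains a linear MDS code $C'\subseteq C$ of length $k$ and dimension $s$ over $\mathbb{F}_q$.
   Context: An orthogonal array OA$(t,k,v)$ (with $1\le t\le k$) is a $v^t\times k$ array with entries from a set $X$ of size $v$ such that, for every choice of $t$ of its columns, each $t$-tuple in $X^t$ appears exactly once as a row of the corresponding $v^t\times t$ subarray. For integers $1\le s\le t\le k$, an augmented orthogonal array AOA$(s,t,k,v)$ is a $v^t\times(k+1)$ array $A$ such that: (1) the first $k$ columns of $A$ form an OA$(t,k,v)$ on a symbol set $X$ of size $v$; (2) the last column of $A$ has entries from a set $Y$ of size $v^{t-s}$; (3) for any choice of $s$ of the first $k$ columns, these $s$ columns together with the last column contain every $(s+1)$-tuple of $X^s\times Y$ exactly once as a row. For a prime power $q$, an OA$(t,k,q)$ over $\mathbb{F}_q$ is linear if its set of rows is a $t$-dimensional $\mathbb{F}_q$-subspace of $\mathbb{F}_q^k$; an AOA$(s,t,k,q)$ is linear if $X=\mathbb{F}_q$, $Y=\mathbb{F}_q^{t-s}$, and its set of rows, regarded as vectors in $\mathbb{F}_q^{k}\times\mathbb{F}_q^{t-s}=\mathbb{F}_q^{k+t-s}$, is an $\mathbb{F}_q$-linear subspace. A linear code of length $k$ and dimension $t$ over $\mathbb{F}_q$ is a $t$-dimensional subspace of $\mathbb{F}_q^k$; it is MDS (maximum distance separable) if its minimum Hamming distance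 is $k-t+1$ (equivalently, any $t$ columns of a $t\times k$ generator matrix are linearly independent). *)

theory Defs
  imports Complex_Main "HOL-Library.Function_Algebras" "HOL-Library.FuncSet"
begin

text \<open>Vectors of \<open>F_q^n\<close> are modelled as functions \<open>nat \<Rightarrow> 'a\<close> that vanish outside \<open>{0..<n}\<close>;
  coordinate \<open>i\<close> is column \<open>i\<close>.\<close>

definition fscale :: "'a::field \<Rightarrow> (nat \<Rightarrow> 'a) \<Rightarrow> (nat \<Rightarrow> 'a)" where
  "fscale c v = (\<lambda>i. c * v i)"

interpretation fv: vector_space fscale
  by unfold_locales (auto simp: fscale_def algebra_simps fun_eq_iff)

definition vecs :: "nat \<Rightarrow> (nat \<Rightarrow> 'a::zero) set" where
  "vecs n = {v. \<forall>i\<ge>n. v i = 0}"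

definition linear_code :: "nat \<Rightarrow> nat \<Rightarrow> (nat \<Rightarrow> 'a::field) set \<Rightarrow> bool" where
  "linear_code k d C \<longleftrightarrow> C \<subseteq> vecs k \<and> fv.subspace C \<and> fv.dim C = d"

definition hamming_dist :: "nat \<Rightarrow> (nat \<Rightarrow> 'a) \<Rightarrow> (nat \<Rightarrow> 'a) \<Rightarrow> nat" where
  "hamming_dist k x y = card {i\<in>{0..<k}. x i \<noteq> y i}"

definition min_dist :: "nat \<Rightarrow> (nat \<Rightarrow> 'a) set \<Rightarrow> nat" where
  "min_dist k C = Min {hamming_dist k x y | x y. x \<in> C \<and> y \<in> C \<and> x \<noteq> y}"

definition MDS_code :: "nat \<Rightarrow> nat \<Rightarrow> (nat \<Rightarrow> 'a::field) set \<Rightarrow> bool" where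
  "MDS_code k d C \<longleftrightarrow> linear_code k d C \<and> min_dist k C = k - d + 1"

definition covers_once :: "(nat \<Rightarrow> 'a) set \<Rightarrow> nat set \<Rightarrow> bool" where
  "covers_once R J \<longleftrightarrow> bij_betw (\<lambda>r. restrict r J) R (J \<rightarrow>\<^sub>E (UNIV :: 'a set))"

text \<open>Linear AOA(s,t,k,q) over the finite field \<open>'a\<close>: rows live in \<open>F_q^{k+(t-s)}\<close>;
  columns \<open>0..<k\<close> are the first \<open>k\<close> columns, and coordinates \<open>k..<k+(t-s)\<close> together
  form the last column with values in \<open>Y = F_q^{t-s}\<close>.\<close>
definition linear_AOA :: "nat \<Rightarrow> nat \<Rightarrow> nat \<Rightarrow> (nat \<Rightarrow> 'a::field) set \<Rightarrow> bool" where
  "linear_AOA s t k R \<longleftrightarrow>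
     R \<subseteq> vecs (k + (t - s)) \<and> fv.subspace R \<and>
     (\<forall>J. J \<subseteq> {0..<k} \<and> card J = t \<longrightarrow> covers_once R J) \<and>
     (\<forall>J. J \<subseteq> {0..<k} \<and> card J = s \<longrightarrow> covers_once R (J \<union> {k..<k + (t - s)}))"

end

theory Submission
  imports Defs
begin


lemma vecs_finite: "finite (vecs k :: (nat \<Rightarrow> 'a::{finite,zero}) set)"
proof -
  have "vecs k = (\<lambda>f. \<lambda>i. if i < k then f i else 0) ` ({0..<k} \<rightarrow>\<^sub>E (UNIV::'a set))"
  proof (rule set_eqI, rule iffI)
    fix v :: "nat \<Rightarrow> 'a" assume "v \<in> vecs k"
    then have "v = (\<lambda>i. if i < k then (restrict v {0..<k}) i else 0)"
      by (auto simp: vecs_def fun_eq_iff)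
    then show "v \<in> (\<lambda>f. \<lambda>i. if i < k then f i else 0) ` ({0..<k} \<rightarrow>\<^sub>E UNIV)" by force
  qed (auto simp: vecs_def)
  then show ?thesis by (simp add: finite_PiE)
qed

lemma card_subspace:
  fixes S :: "(nat \<Rightarrow> 'a::{finite,field}) set"
  assumes fin: "finite S" and sub: "fv.subspace S"
  shows "card S = card (UNIV::'a set) ^ fv.dim S"
proof -
  obtain B where B: "B \<subseteq> S" "fv.independent B" "S \<subseteq> fv.span B" "card B = fv.dim S"
    by (rule fv.basis_exists)
  have fB: "finite B" using B(1) fin finite_subset by blast
  have spanB: "fv.span B = S" using fv.span_subspace[OF B(1) B(3) sub] .
  define E where "E = (\<lambda>u. \<Sum>v\<in>B. fscale (u v) v)"
  have bij: "bij_betw E (B \<rightarrow>\<^sub>E (UNIV::'a set)) S"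
  proof (rule bij_betwI')
    fix u w assume u: "u \<in> B \<rightarrow>\<^sub>E (UNIV::'a set)" and w: "w \<in> B \<rightarrow>\<^sub>E (UNIV::'a set)"
    show "(E u = E w) = (u = w)"
    proof
      assume eq: "E u = E w"
      have "(\<Sum>v\<in>B. fscale (u v - w v) v) = E u - E w"
        unfolding E_def by (simp add: fv.scale_left_diff_distrib sum_subtractf)
      also have "\<dots> = 0" using eq by simp
      finally have z: "(\<Sum>v\<in>B. fscale (u v - w v) v) = 0" .
      have "\<forall>v\<in>B. u v - w v = 0"
      proof (rule ccontr)
        assume "\<not> (\<forall>v\<in>B. u v - w v = 0)"
        then have "fv.dependent B" unfolding fv.dependent_finite[OF fB]
          using z by (intro exI[of _ "\<lambda>v. u v - w v"]) blast
        then show False using B(2) by simp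
      qed
      then show "u = w" using u w by (auto simp: PiE_def extensional_def fun_eq_iff)
    qed simp
  next
    fix u assume "u \<in> B \<rightarrow>\<^sub>E (UNIV::'a set)"
    then show "E u \<in> S" unfolding E_def
      using B(1) by (auto intro!: fv.subspace_sum[OF sub] fv.subspace_scale[OF sub])
  next
    fix x assume "x \<in> S"
    then obtain u where "x = (\<Sum>v\<in>B. fscale (u v) v)"
      using spanB fv.span_finite[OF fB] by auto
    then have "x = E (restrict u B)" unfolding E_def by (auto intro: sum.cong)
    then show "\<exists>u\<in>B \<rightarrow>\<^sub>E UNIV. x = E u" by auto
  qed
  have "card S = card (B \<rightarrow>\<^sub>E (UNIV::'a set))" using bij_betw_same_card[OF bij] by simp
  also have "\<dots> = card (UNIV::'a set) ^ card B" by (simp add: card_PiE[OF fB])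
  finally show ?thesis using B(4) by simp
qed

lemma card_target: "finite J \<Longrightarrow> card (J \<rightarrow>\<^sub>E (UNIV::'a::finite set)) = card (UNIV::'a set) ^ card J"
  by (simp add: card_PiE)

lemma card_field_ge2: "2 \<le> card (UNIV::'a::{finite,field} set)"
proof -
  have "{0::'a, 1} \<subseteq> UNIV" by simp
  then have "card {0::'a,1} \<le> card (UNIV::'a set)" by (rule card_mono[OF finite])
  then show ?thesis by simp
qed

lemma ham_le: 
  assumes "J \<subseteq> {0..<k}" "restrict x J = restrict y J"
  shows "hamming_dist k x y \<le> k - card J"
proof -
  have "{i\<in>{0..<k}. x i \<noteq> y i} \<subseteq> {0..<k} - J"
    using assms(2) by (auto simp: fun_eq_iff restrict_def split: if_splits)
  then have "hamming_dist k x y \<le> card ({0..<k} - J)"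
    unfolding hamming_dist_def by (intro card_mono) auto
  also have "\<dots> = k - card J" using assms(1) by (simp add: card_Diff_subset finite_subset)
  finally show ?thesis .
qed

lemma ham_le_k: "hamming_dist k x y \<le> k"
  unfolding hamming_dist_def by (rule order_trans[OF card_mono[of "{0..<k}"]]) auto

lemma MDS_iff:
  fixes S :: "(nat \<Rightarrow> 'a::{finite,field}) set"
  assumes d1: "1 \<le> d" and dk: "d \<le> k"
  shows "MDS_code k d S \<longleftrightarrow> S \<subseteq> vecs k \<and> fv.subspace S \<and>
     (\<forall>J. J \<subseteq> {0..<k} \<and> card J = d \<longrightarrow> covers_once S J)"
proof
  assume M: "MDS_code k d S"
  then have Sv: "S \<subseteq> vecs k" and sub: "fv.subspace S" and dim: "fv.dim S = d"
    and md: "min_dist k S = k - d + 1"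
    by (auto simp: MDS_code_def linear_code_def)
  have fin: "finite S" by (rule finite_subset[OF Sv vecs_finite])
  have cS: "card S = card (UNIV::'a set) ^ d" using card_subspace[OF fin sub] dim by simp
  have finD: "finite {hamming_dist k x y | x y. x \<in> S \<and> y \<in> S \<and> x \<noteq> y}"
    by (rule finite_subset[of _ "{0..k}"]) (auto simp: ham_le_k)
  show "S \<subseteq> vecs k \<and> fv.subspace S \<and> (\<forall>J. J \<subseteq> {0..<k} \<and> card J = d \<longrightarrow> covers_once S J)"
  proof (intro conjI allI impI Sv sub)
    fix J assume J: "J \<subseteq> {0..<k} \<and> card J = d"
    have fJ: "finite J" using J finite_subset by blast
    have inj: "inj_on (\<lambda>r. restrict r J) S"
    proof (rule inj_onI, rule ccontr)
      fix x y assume xy: "x \<in> S" "y \<in> S" "restrict x J = restrict y J" "x \<noteq> y"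
      have "min_dist k S \<le> hamming_dist k x y" unfolding min_dist_def
        using xy by (intro Min_le[OF finD] CollectI exI[of _ x] exI[of _ y]) simp
      moreover have "hamming_dist k x y \<le> k - d" using ham_le[of J k x y] J xy by simp
      ultimately show False using md dk by simp
    qed
    have sub2: "(\<lambda>r. restrict r J) ` S \<subseteq> J \<rightarrow>\<^sub>E UNIV" by auto
    have "card ((\<lambda>r. restrict r J) ` S) = card (J \<rightarrow>\<^sub>E (UNIV::'a set))"
      using card_image[OF inj] cS card_target[OF fJ, where 'a='a] J by simp
    then have "(\<lambda>r. restrict r J) ` S = J \<rightarrow>\<^sub>E UNIV"
      using card_subset_eq[OF _ sub2] fJ by (simp add: finite_PiE)
    then show "covers_once S J" unfolding covers_once_def bij_betw_def using inj by simp
  qed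
next
  assume A: "S \<subseteq> vecs k \<and> fv.subspace S \<and> (\<forall>J. J \<subseteq> {0..<k} \<and> card J = d \<longrightarrow> covers_once S J)"
  then have Sv: "S \<subseteq> vecs k" and sub: "fv.subspace S"
    and cov: "\<And>J. J \<subseteq> {0..<k} \<Longrightarrow> card J = d \<Longrightarrow> bij_betw (\<lambda>r. restrict r J) S (J \<rightarrow>\<^sub>E UNIV)"
    by (auto simp: covers_once_def)
  have fin: "finite S" by (rule finite_subset[OF Sv vecs_finite])
  define J0 where "J0 = {0..<d}"
  have J0: "J0 \<subseteq> {0..<k}" "card J0 = d" using dk by (auto simp: J0_def)
  have "card S = card (J0 \<rightarrow>\<^sub>E (UNIV::'a set))" using bij_betw_same_card[OF cov[OF J0]] .
  also have "\<dots> = card (UNIV::'a set) ^ d" using card_target[of J0] J0 by (simp add: J0_def)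
  finally have "card (UNIV::'a set) ^ fv.dim S = card (UNIV::'a set) ^ d"
    using card_subspace[OF fin sub] by simp
  moreover have q1: "1 < card (UNIV::'a set)" using card_field_ge2[where 'a='a] by simp
  ultimately have dim: "fv.dim S = d" using power_inject_exp[OF q1, of "fv.dim S" d] by simp
  have low: "k - d + 1 \<le> hamming_dist k x y" if xy: "x \<in> S" "y \<in> S" "x \<noteq> y" for x y
  proof (rule ccontr)
    assume "\<not> ?thesis"
    then have h: "hamming_dist k x y \<le> k - d" by simp
    define Z where "Z = {i\<in>{0..<k}. x i = y i}"
    define H where "H = {i\<in>{0..<k}. x i \<noteq> y i}"
    have U: "{0..<k} = Z \<union> H" by (auto simp: Z_def H_def)
    have "card (Z \<union> H) = card Z + card H"
      by (rule card_Un_disjoint) (auto simp: Z_def H_def)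
    moreover have "card H = hamming_dist k x y" unfolding hamming_dist_def H_def ..
    moreover have "card {0..<k} = card (Z \<union> H)" using U by (rule arg_cong)
    ultimately have "card {0..<k} = card Z + hamming_dist k x y" by simp
    then have "k = card Z + hamming_dist k x y" by simp
    then have "d \<le> card Z" using h dk by linarith
    then obtain J where J: "J \<subseteq> Z" "card J = d" by (rule obtain_subset_with_card_n)
    have JZ: "J \<subseteq> {0..<k}" using J by (auto simp: Z_def)
    have "restrict x J = restrict y J" by (rule ext) (use J in \<open>auto simp: Z_def\<close>)
    then show False using inj_onD[OF bij_betw_imp_inj_on[OF cov[OF JZ J(2)]] _ xy(1) xy(2)] xy(3) by blast
  qed
  define f where "f = (\<lambda>i\<in>J0. if i = d - 1 then (1::'a) else 0)"
  have "f \<in> J0 \<rightarrow>\<^sub>E UNIV" by (simp add: f_def)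
  then have "f \<in> (\<lambda>r. restrict r J0) ` S" using cov[OF J0] unfolding bij_betw_def by simp
  then obtain x where x: "x \<in> S" "restrict x J0 = f" by auto
  have dJ: "d - 1 \<in> J0" using d1 by (simp add: J0_def)
  have "x (d - 1) = restrict x J0 (d - 1)" using dJ by simp
  also have "\<dots> = 1" using x(2) dJ by (simp add: f_def)
  finally have x1: "x (d - 1) = 1" .
  have z0: "0 \<in> S" using fv.subspace_0[OF sub] .
  have xne: "x \<noteq> 0" using x1 by auto
  have "{i\<in>{0..<k}. x i \<noteq> (0::nat\<Rightarrow>'a) i} \<subseteq> {0..<k} - {0..<d-1}"
  proof
    fix i assume i: "i \<in> {i\<in>{0..<k}. x i \<noteq> (0::nat\<Rightarrow>'a) i}"
    show "i \<in> {0..<k} - {0..<d-1}"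
    proof (rule ccontr)
      assume "i \<notin> {0..<k} - {0..<d-1}"
      then have "i < d - 1" using i by auto
      then have iJ: "i \<in> J0" by (simp add: J0_def)
      have "x i = restrict x J0 i" using iJ by simp
      then have "x i = f i" using x(2) by simp
      also have "f i = 0" using \<open>i < d - 1\<close> d1 unfolding f_def J0_def by auto
      finally show False using i by simp
    qed
  qed
  then have "hamming_dist k x 0 \<le> card ({0..<k} - {0..<d-1})"
    unfolding hamming_dist_def by (intro card_mono) auto
  also have "\<dots> = k - d + 1" using d1 dk by (simp add: card_Diff_subset)
  finally have hx: "hamming_dist k x 0 = k - d + 1" using low[OF x(1) z0 xne] by simp
  have finD: "finite {hamming_dist k x y | x y. x \<in> S \<and> y \<in> S \<and> x \<noteq> y}"
    by (rule finite_subset[of _ "{0..k}"]) (auto simp: ham_le_k)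
  have md: "min_dist k S = k - d + 1" unfolding min_dist_def
  proof (rule Min_eqI[OF finD])
    show "k - d + 1 \<in> {hamming_dist k x y | x y. x \<in> S \<and> y \<in> S \<and> x \<noteq> y}"
      by (rule CollectI, rule exI[of _ x], rule exI[of _ 0]) (use hx x(1) z0 xne in auto)
  next
    fix h assume "h \<in> {hamming_dist k x y | x y. x \<in> S \<and> y \<in> S \<and> x \<noteq> y}"
    then obtain x y where "h = hamming_dist k x y" "x \<in> S" "y \<in> S" "x \<noteq> y" by blast
    then show "k - d + 1 \<le> h" using low by simp
  qed
  show "MDS_code k d S" unfolding MDS_code_def linear_code_def using Sv sub dim md by simp
qed



lemma restrict_eq_iff: "restrict u J = restrict v J \<longleftrightarrow> (\<forall>i\<in>J. u i = v i)"
  by (auto simp: fun_eq_iff restrict_def)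

lemma covers_image:
  assumes inj: "inj_on h A" and eq: "\<And>r. r \<in> A \<Longrightarrow> restrict (h r) J = restrict r J"
    and cov: "covers_once A J"
  shows "covers_once (h ` A) J"
proof -
  have b: "bij_betw h A (h ` A)" using inj by (simp add: bij_betw_def)
  have "bij_betw (\<lambda>r. restrict r J) A (J \<rightarrow>\<^sub>E UNIV)" using cov by (simp add: covers_once_def)
  then have "bij_betw ((\<lambda>r. restrict r J) \<circ> h) A (J \<rightarrow>\<^sub>E UNIV)"
    by (rule bij_betw_cong[THEN iffD1, rotated]) (simp add: eq)
  then show ?thesis unfolding covers_once_def using bij_betw_comp_iff[OF b] by blast
qed

lemma forward:
  fixes R :: "(nat \<Rightarrow> 'a::{finite,field}) set"
  assumes s1: "1 \<le> s" and st: "s < t" and tk: "t \<le> k" and A: "linear_AOA s t k R"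
  shows "\<exists>C C' :: (nat \<Rightarrow> 'a) set. MDS_code k t C \<and> MDS_code k s C' \<and> C' \<subseteq> C"
proof -
  define Y where "Y = {k..<k + (t - s)}"
  have Rv: "R \<subseteq> vecs (k + (t - s))" and subR: "fv.subspace R"
    and covT: "\<And>J. J \<subseteq> {0..<k} \<Longrightarrow> card J = t \<Longrightarrow> covers_once R J"
    and covS: "\<And>J. J \<subseteq> {0..<k} \<Longrightarrow> card J = s \<Longrightarrow> covers_once R (J \<union> Y)"
    using A by (auto simp: linear_AOA_def Y_def)
  define p :: "(nat \<Rightarrow> 'a) \<Rightarrow> (nat \<Rightarrow> 'a)" where "p = (\<lambda>r i. if i < k then r i else 0)"
  have p_add: "p (x + y) = p x + p y" for x y by (auto simp: p_def fun_eq_iff)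
  have p_scale: "p (fscale c x) = fscale c (p x)" for c x by (auto simp: p_def fun_eq_iff fscale_def)
  have p_0: "p 0 = 0" by (auto simp: p_def fun_eq_iff)
  have p_restr: "restrict (p r) J = restrict r J" if "J \<subseteq> {0..<k}" for r J
    using that by (auto simp: restrict_eq_iff p_def)
  have sub_img: "fv.subspace (p ` S)" if "fv.subspace S" for S
  proof (rule fv.subspaceI)
    show "0 \<in> p ` S" using fv.subspace_0[OF that] p_0 by (metis image_eqI)
  next
    fix x y assume "x \<in> p ` S" "y \<in> p ` S"
    then obtain a b where "a \<in> S" "b \<in> S" "x = p a" "y = p b" by auto
    then show "x + y \<in> p ` S" using fv.subspace_add[OF that] p_add by (metis image_eqI)
  next
    fix c x assume "x \<in> p ` S"
    then obtain a where "a \<in> S" "x = p a" by auto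
    then show "fscale c x \<in> p ` S" using fv.subspace_scale[OF that] p_scale by (metis image_eqI)
  qed
  have pv: "p ` S \<subseteq> vecs k" for S by (auto simp: p_def vecs_def)
  have T0: "{0..<t} \<subseteq> {0..<k}" "card {0..<t} = t" using tk by auto
  have injR: "inj_on (\<lambda>r. restrict r {0..<t}) R"
    using covT[OF T0] by (simp add: covers_once_def bij_betw_def)
  have injp: "inj_on p R"
  proof (rule inj_onI)
    fix x y assume "x \<in> R" "y \<in> R" "p x = p y"
    then have "restrict (p x) {0..<t} = restrict (p y) {0..<t}" by simp
    then have "restrict x {0..<t} = restrict y {0..<t}" using p_restr[OF T0(1)] by simp
    then show "x = y" using injR \<open>x \<in> R\<close> \<open>y \<in> R\<close> by (meson inj_onD)
  qed
  define C where "C = p ` R"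
  have t1: "1 \<le> t" using s1 st by simp
  have MC: "MDS_code k t C"
    unfolding MDS_iff[OF t1 tk]
  proof (intro conjI allI impI)
    show "C \<subseteq> vecs k" unfolding C_def by (rule pv)
    show "fv.subspace C" unfolding C_def by (rule sub_img[OF subR])
    fix J assume J: "J \<subseteq> {0..<k} \<and> card J = t"
    show "covers_once C J" unfolding C_def
      by (rule covers_image[OF injp]) (use J p_restr covT in auto)
  qed
  define R' where "R' = {r\<in>R. \<forall>i\<in>Y. r i = 0}"
  have subR': "fv.subspace R'"
  proof (rule fv.subspaceI)
    show "0 \<in> R'" using fv.subspace_0[OF subR] by (simp add: R'_def)
  next
    fix x y assume "x \<in> R'" "y \<in> R'"
    then show "x + y \<in> R'" using fv.subspace_add[OF subR] by (auto simp: R'_def)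
  next
    fix c x assume "x \<in> R'"
    then show "fscale c x \<in> R'" using fv.subspace_scale[OF subR] by (auto simp: R'_def fscale_def)
  qed
  have covR': "covers_once R' J" if J: "J \<subseteq> {0..<k}" "card J = s" for J
  proof -
    have bJY: "bij_betw (\<lambda>r. restrict r (J \<union> Y)) R ((J \<union> Y) \<rightarrow>\<^sub>E UNIV)"
      using covS[OF J] by (simp add: covers_once_def)
    have inj: "inj_on (\<lambda>r. restrict r J) R'"
    proof (rule inj_onI)
      fix x y assume xy: "x \<in> R'" "y \<in> R'" "restrict x J = restrict y J"
      then have "restrict x (J \<union> Y) = restrict y (J \<union> Y)"
        by (auto simp: restrict_eq_iff R'_def)
      moreover have "x \<in> R" "y \<in> R" using xy by (auto simp: R'_def)
      ultimately show "x = y" using bij_betw_imp_inj_on[OF bJY] by (meson inj_onD)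
    qed
    have "(\<lambda>r. restrict r J) ` R' = J \<rightarrow>\<^sub>E UNIV"
    proof
      show "(\<lambda>r. restrict r J) ` R' \<subseteq> J \<rightarrow>\<^sub>E UNIV" by auto
    next
      show "J \<rightarrow>\<^sub>E UNIV \<subseteq> (\<lambda>r. restrict r J) ` R'"
      proof
        fix f :: "nat \<Rightarrow> 'a" assume f: "f \<in> J \<rightarrow>\<^sub>E UNIV"
        define g where "g = (\<lambda>i\<in>J \<union> Y. if i \<in> J then f i else 0)"
        have "g \<in> (J \<union> Y) \<rightarrow>\<^sub>E UNIV" by (auto simp: g_def)
        then have "g \<in> (\<lambda>r. restrict r (J \<union> Y)) ` R" using bJY by (simp add: bij_betw_def)
        then obtain r where r: "r \<in> R" "restrict r (J \<union> Y) = g" by auto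
        have "\<forall>i\<in>J \<union> Y. r i = g i" using r(2) by (metis restrict_apply')
        moreover have "J \<inter> Y = {}" using J(1) by (auto simp: Y_def)
        ultimately have "r \<in> R'" "restrict r J = f"
          using r(1) f by (auto simp: R'_def g_def restrict_def fun_eq_iff PiE_def extensional_def)
        then show "f \<in> (\<lambda>r. restrict r J) ` R'" by (metis image_eqI)
      qed
    qed
    then show ?thesis using inj by (simp add: covers_once_def bij_betw_def)
  qed
  have injp': "inj_on p R'" using injp by (rule inj_on_subset) (auto simp: R'_def)
  define C' where "C' = p ` R'"
  have sk: "s \<le> k" using st tk by simp
  have MC': "MDS_code k s C'"
    unfolding MDS_iff[OF s1 sk]
  proof (intro conjI allI impI)
    show "C' \<subseteq> vecs k" unfolding C'_def by (rule pv)
    show "fv.subspace C'" unfolding C'_def by (rule sub_img[OF subR'])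
    fix J assume J: "J \<subseteq> {0..<k} \<and> card J = s"
    show "covers_once C' J" unfolding C'_def
      by (rule covers_image[OF injp']) (use J p_restr covR' in auto)
  qed
  have "C' \<subseteq> C" unfolding C'_def C_def R'_def by auto
  then show ?thesis using MC MC' by blast
qed



lemma backward:
  fixes C C' :: "(nat \<Rightarrow> 'a::{finite,field}) set"
  assumes s1: "1 \<le> s" and st: "s < t" and tk: "t \<le> k"
    and MC: "MDS_code k t C" and MC': "MDS_code k s C'" and CC: "C' \<subseteq> C"
  shows "\<exists>R :: (nat \<Rightarrow> 'a) set. linear_AOA s t k R"
proof -
  have t1: "1 \<le> t" and sk: "s \<le> k" using s1 st tk by auto
  have Cv: "C \<subseteq> vecs k" and subC: "fv.subspace C"
    and covC: "\<And>J. J \<subseteq> {0..<k} \<Longrightarrow> card J = t \<Longrightarrow> bij_betw (\<lambda>r. restrict r J) C (J \<rightarrow>\<^sub>E UNIV)"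
    using MC unfolding MDS_iff[OF t1 tk] covers_once_def by auto
  have subC': "fv.subspace C'"
    and covC': "\<And>J. J \<subseteq> {0..<k} \<Longrightarrow> card J = s \<Longrightarrow> bij_betw (\<lambda>r. restrict r J) C' (J \<rightarrow>\<^sub>E UNIV)"
    using MC' unfolding MDS_iff[OF s1 sk] covers_once_def by auto
  define J0 where "J0 = {0..<s}"
  define T where "T = {0..<t}"
  define Y where "Y = {k..<k + (t - s)}"
  have J0: "J0 \<subseteq> {0..<k}" "card J0 = s" using sk by (auto simp: J0_def)
  have T: "T \<subseteq> {0..<k}" "card T = t" using tk by (auto simp: T_def)
  have b0: "bij_betw (\<lambda>r. restrict r J0) C' (J0 \<rightarrow>\<^sub>E UNIV)" by (rule covC'[OF J0])
  define g where "g = (\<lambda>c. inv_into C' (\<lambda>r. restrict r J0) (restrict c J0))"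
  have g_in: "g c \<in> C'" for c
  proof -
    have "restrict c J0 \<in> (\<lambda>r. restrict r J0) ` C'" using b0 by (simp add: bij_betw_def)
    then show ?thesis unfolding g_def by (rule inv_into_into)
  qed
  have g_res: "restrict (g c) J0 = restrict c J0" for c
  proof -
    have "restrict c J0 \<in> (\<lambda>r. restrict r J0) ` C'" using b0 by (simp add: bij_betw_def)
    then show ?thesis unfolding g_def by (rule f_inv_into_f)
  qed
  have g_uniq: "x = g c" if "x \<in> C'" "\<forall>i\<in>J0. x i = c i" for x c
  proof -
    have "restrict x J0 = restrict (g c) J0" using that(2) g_res[of c] by (simp add: restrict_eq_iff)
    then show ?thesis by (rule inj_onD[OF bij_betw_imp_inj_on[OF b0] _ that(1) g_in])
  qed
  have g_add: "g (x + y) = g x + g y" for x y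
  proof -
    have "g x + g y \<in> C'" using fv.subspace_add[OF subC' g_in g_in] .
    moreover have "\<forall>i\<in>J0. (g x + g y) i = (x + y) i"
      using g_res[of x] g_res[of y] by (simp add: restrict_eq_iff)
    ultimately have "g x + g y = g (x + y)" by (rule g_uniq)
    then show ?thesis by simp
  qed
  have g_scale: "g (fscale a x) = fscale a (g x)" for a x
  proof -
    have "fscale a (g x) \<in> C'" using fv.subspace_scale[OF subC' g_in] .
    moreover have "\<forall>i\<in>J0. (fscale a (g x)) i = (fscale a x) i"
      using g_res[of x] by (simp add: restrict_eq_iff fscale_def)
    ultimately have "fscale a (g x) = g (fscale a x)" by (rule g_uniq)
    then show ?thesis by simp
  qed
  have g_diff: "g (x - y) = g x - g y" for x y
  proof -
    have "g x = g (x - y) + g y" using g_add[of "x - y" y] by simp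
    then show ?thesis by (simp add: eq_diff_eq)
  qed
  have g_C': "g c = c" if "c \<in> C'" for c using g_uniq[OF that, of c] by simp
  define phi where "phi = (\<lambda>c i. if k \<le> i \<and> i < k + (t - s) then (c - g c) (i - k + s) else (0::'a))"
  have phi_add: "phi (x + y) = phi x + phi y" for x y
    by (auto simp: phi_def fun_eq_iff g_add)
  have phi_diff: "phi (x - y) = phi x - phi y" for x y
    by (auto simp: phi_def fun_eq_iff g_diff)
  have phi_scale: "phi (fscale a x) = fscale a (phi x)" for a x
    unfolding phi_def g_scale by (auto simp: fun_eq_iff fscale_def algebra_simps)
  have phi_0: "phi 0 = 0" using phi_diff[of 0 0] by simp
  define e where "e = (\<lambda>c. c + phi c)"
  define R where "R = e ` C"
  have e_low: "e c i = c i" if "i < k" for c i using that by (simp add: e_def phi_def)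
  have e_high: "e c i = phi c i" if "c \<in> C" "k \<le> i" for c i
    using that Cv by (auto simp: e_def vecs_def)
  have injE: "inj_on e C"
  proof (rule inj_onI)
    fix x y assume xy: "x \<in> C" "y \<in> C" "e x = e y"
    show "x = y"
    proof
      fix i show "x i = y i"
      proof (cases "i < k")
        case True
        have "e x i = e y i" using xy(3) by simp
        then show ?thesis using e_low[OF True, of x] e_low[OF True, of y] by simp
      next
        case False
        then have "k \<le> i" by simp
        have "x \<in> vecs k" "y \<in> vecs k" using xy(1,2) Cv by auto
        then show ?thesis using \<open>k \<le> i\<close> unfolding vecs_def by simp
      qed
    qed
  qed
  have fT: "finite T" by (simp add: T_def)
  have cardC: "card C = card (UNIV::'a set) ^ t"
  proof -
    have "card C = card (T \<rightarrow>\<^sub>E (UNIV::'a set))" by (rule bij_betw_same_card[OF covC[OF T]])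
    also have "\<dots> = card (UNIV::'a set) ^ card T" by (rule card_target[OF fT])
    finally show ?thesis using T(2) by simp
  qed
  have Rv: "R \<subseteq> vecs (k + (t - s))"
  proof
    fix x assume "x \<in> R"
    then obtain c where c: "c \<in> C" "x = e c" by (auto simp: R_def)
    show "x \<in> vecs (k + (t - s))" unfolding vecs_def
    proof (intro CollectI allI impI)
      fix i assume i: "k + (t - s) \<le> i"
      then have "x i = phi c i" using e_high[OF c(1), of i] c(2) by simp
      then show "x i = 0" using i by (simp add: phi_def)
    qed
  qed
  have subR: "fv.subspace R"
  proof (rule fv.subspaceI)
    have "0 = e 0" by (simp add: e_def phi_0)
    then show "0 \<in> R" unfolding R_def using fv.subspace_0[OF subC] by (rule image_eqI)
  next
    fix x y assume "x \<in> R" "y \<in> R"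
    then obtain a b where "a \<in> C" "b \<in> C" "x = e a" "y = e b" by (auto simp: R_def)
    moreover have "e a + e b = e (a + b)" by (simp add: e_def phi_add algebra_simps)
    ultimately have "x + y = e (a + b)" "a + b \<in> C" using fv.subspace_add[OF subC] by auto
    then show "x + y \<in> R" unfolding R_def by (rule image_eqI)
  next
    fix c x assume "x \<in> R"
    then obtain a where "a \<in> C" "x = e a" by (auto simp: R_def)
    moreover have "fscale c (e a) = e (fscale c a)"
      unfolding e_def phi_scale by (simp add: fscale_def fun_eq_iff algebra_simps)
    ultimately have "fscale c x = e (fscale c a)" "fscale c a \<in> C" using fv.subspace_scale[OF subC] by auto
    then show "fscale c x \<in> R" unfolding R_def by (rule image_eqI)
  qed
  have covT: "covers_once R J" if J: "J \<subseteq> {0..<k}" "card J = t" for J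
    unfolding R_def
  proof (rule covers_image[OF injE])
    show "restrict (e r) J = restrict r J" for r using J(1) e_low by (auto simp: restrict_eq_iff)
    show "covers_once C J" using covC[OF J] by (simp add: covers_once_def)
  qed
  have covS: "covers_once R (J \<union> Y)" if J: "J \<subseteq> {0..<k}" "card J = s" for J
  proof -
    have fJ: "finite J" using J(1) finite_subset by blast
    have JY: "J \<inter> Y = {}" using J(1) by (auto simp: Y_def)
    have cJY: "card (J \<union> Y) = t" using card_Un_disjoint[OF fJ _ JY] J(2) st by (simp add: Y_def)
    have injC': "inj_on (\<lambda>r. restrict r J) C'" using bij_betw_imp_inj_on[OF covC'[OF J]] .
    have injT: "inj_on (\<lambda>r. restrict r T) C" using bij_betw_imp_inj_on[OF covC[OF T]] .
    have inj: "inj_on (\<lambda>r. restrict r (J \<union> Y)) R"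
    proof (rule inj_onI)
      fix x y assume "x \<in> R" "y \<in> R" and xy: "restrict x (J \<union> Y) = restrict y (J \<union> Y)"
      then obtain a b where ab: "a \<in> C" "b \<in> C" "x = e a" "y = e b" by (auto simp: R_def)
      define c where "c = a - b"
      have cC: "c \<in> C" using fv.subspace_diff[OF subC ab(1,2)] by (simp add: c_def)
      have cJ: "\<forall>i\<in>J. c i = 0"
      proof
        fix i assume "i \<in> J"
        then have "i < k" "e a i = e b i" using xy J(1) ab by (auto simp: restrict_eq_iff)
        then show "c i = 0" using e_low by (simp add: c_def)
      qed
      have cY: "phi c i = 0" if "i \<in> Y" for i
      proof -
        have "e a i = e b i" using xy that ab by (auto simp: restrict_eq_iff)
        moreover have "k \<le> i" using that by (simp add: Y_def)
        ultimately have "phi a i = phi b i" using e_high[OF ab(1), of i] e_high[OF ab(2), of i] by simp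
        then show ?thesis by (simp add: c_def phi_diff)
      qed
      define d where "d = c - g c"
      have "g c \<in> C" using g_in[of c] CC by blast
      then have dC: "d \<in> C" unfolding d_def by (rule fv.subspace_diff[OF subC cC])
      have dT: "\<forall>i\<in>T. d i = 0"
      proof
        fix i assume iT: "i \<in> T"
        show "d i = 0"
        proof (cases "i < s")
          case True
          then have "i \<in> J0" by (simp add: J0_def)
          then show ?thesis using g_res[of c] by (simp add: d_def restrict_eq_iff)
        next
          case False
          then have "i - s + k \<in> Y" "i - s + k - k + s = i" using iT by (auto simp: Y_def T_def)
          then show ?thesis using cY[of "i - s + k"] by (simp add: phi_def d_def Y_def)
        qed
      qed
      have "restrict d T = restrict 0 T" using dT by (simp add: restrict_eq_iff)
      then have "d = 0" using inj_onD[OF injT _ dC fv.subspace_0[OF subC]] by simp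
      then have "c = g c" by (simp add: d_def)
      then have cC': "c \<in> C'" using g_in[of c] by simp
      have "restrict c J = restrict 0 J" using cJ by (simp add: restrict_eq_iff)
      then have "c = 0" using inj_onD[OF injC' _ cC' fv.subspace_0[OF subC']] by simp
      then show "x = y" using ab by (simp add: c_def)
    qed
    have fR: "finite R" using finite_subset[OF Rv vecs_finite] .
    have cR: "card R = card (UNIV::'a set) ^ t"
      using card_image[OF injE] cardC by (simp add: R_def)
    have sub2: "(\<lambda>r. restrict r (J \<union> Y)) ` R \<subseteq> (J \<union> Y) \<rightarrow>\<^sub>E UNIV" by (simp add: image_subset_iff)
    have fJY: "finite (J \<union> Y)" using fJ by (simp add: Y_def)
    have "card ((\<lambda>r. restrict r (J \<union> Y)) ` R) = card ((J \<union> Y) \<rightarrow>\<^sub>E (UNIV::'a set))"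
      using card_image[OF inj] cR card_target[OF fJY, where 'a='a] cJY by simp
    then have "(\<lambda>r. restrict r (J \<union> Y)) ` R = (J \<union> Y) \<rightarrow>\<^sub>E UNIV"
      using card_subset_eq[OF _ sub2] fJY by (simp add: finite_PiE)
    then show ?thesis unfolding covers_once_def bij_betw_def using inj by simp
  qed
  have "linear_AOA s t k R" unfolding linear_AOA_def using Rv subR covT covS by (simp add: Y_def)
  then show ?thesis by blast
qed


theorem theorem3p3:
  fixes s t k :: nat
  assumes "1 \<le> s" and "s < t" and "t \<le> k"
  shows "(\<exists>R :: (nat \<Rightarrow> 'a::{finite,field}) set. linear_AOA s t k R) \<longleftrightarrow>
         (\<exists>C C' :: (nat \<Rightarrow> 'a) set. MDS_code k t C \<and> MDS_code k s C' \<and> C' \<subseteq> C)"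
proof
  assume "\<exists>R :: (nat \<Rightarrow> 'a) set. linear_AOA s t k R"
  then obtain R :: "(nat \<Rightarrow> 'a) set" where R: "linear_AOA s t k R" by blast
  show "\<exists>C C' :: (nat \<Rightarrow> 'a) set. MDS_code k t C \<and> MDS_code k s C' \<and> C' \<subseteq> C"
    by (rule forward[OF assms R])
next
  assume "\<exists>C C' :: (nat \<Rightarrow> 'a) set. MDS_code k t C \<and> MDS_code k s C' \<and> C' \<subseteq> C"
  then obtain C C' :: "(nat \<Rightarrow> 'a) set" where CC: "MDS_code k t C" "MDS_code k s C'" "C' \<subseteq> C"
    by blast
  show "\<exists>R :: (nat \<Rightarrow> 'a) set. linear_AOA s t k R"
    by (rule backward[OF assms CC])
qed

end
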